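(* Let $\mathbf v\in\omega^{<\omega}$ and let $O\subsetneq\mathbf S_{\mathbf v}$ be open in the Baire space and $\pi$-dense at $\mathbf v$. Then there is a foliage tree $\mathbf G$ such that: (a1) $0_{\mathbf G}=\mathbf v$; (a2) $\mathrm{height}\,\mathbf G\le\omega$; (a3) $\mathbf G$ is $\aleph_0$-branching; (a4) $\mathbf G$ has bounded chains; (a5) $\mathbf G$ is locally strict; (a6) $\mathbf G$ is open in the Baire space; (a7) $\mathbf G$ is a foliage graft for $\mathbf S$; (a8) $\mathbf G$ preserves shoots of $\mathbf S$; (a9) $\mathrm{impl}\,\mathbf G\ne\emptyset$; (a10) $\mathrm{cut}(\mathbf S,\mathbf G)=\mathbf S_{\mathbf v}\setminus O$; (a11) $O$ is the union of the pairwise disjoint family $(\mathbf S_z)_{z\in\max\mathbf G}$.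
   Context: Trees: a tree is a pair $(Q,<)$ with $<$ irreflexive transitive and predecessor sets well-ordered; $\mathrm{sons}(x)$ = immediate successors; $\max$ = maximal nodes; $0$ = least node; bounded chains: every nonempty chain has an upper-bound node; $\aleph_0$-branching: every non-maximal node has exactly $\aleph_0$ sons; height of a tree = least ordinal $\beta$ such that no node has predecessor set of order type $\beta$; $A{\downarrow}=\{v:\exists a\in A\ a\le v\}$. A graft for a tree $\mathcal T$ is a tree $\mathcal G$ with more than one node, least node $0_{\mathcal G}\in\mathrm{nodes}\,\mathcal T$, $\max\mathcal G\subseteq\{v\in\mathrm{nodes}\,\mathcal T:v>_{\mathcal T}0_{\mathcal G}\}$ an antichain in $\mathcal T$, and $\mathrm{impl}\,\mathcal G:=\mathrm{nodes}\,\mathcal G\setminus(\{0_{\mathcal G}\}\cup\max\mathcal G)$ disjoint from $\mathrm{nodes}\,\mathcal T$; $\mathrm{expl}(\mathcal T,\mathcal G)=\{v:v>_{\mathcal T}0_{\mathcal G}\}\setminus(\max\mathcal G){\downarrow}_{\mathcal T}$. Foliage trees: $\mathbf F=(\mathcal T,l)$, leaves $\mathbf F_x=l(x)$; tree notions refer to the skeleton $\mathcal T$; nonincreasing: $x\le y\Rightarrow\mathbf F_y\subseteq\mathbf F_x$; locally strict: each non-maximal $\mathbf F_x$ is the union of the pairwise disjoint family $(\mathbf F_s)_{s\in\mathrm{sons}(x)}$; open in a space: all leaves open; $\mathrm{flesh}\,\mathbf F=\bigcup_x\mathbf F_x$; $\mathrm{shoot}_{\mathbf F}(z)=\{\bigcup_{s\in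 C}\mathbf F_s:C$ cofinite subset of $\mathrm{sons}(z)\}$; $\mathrm{scope}_{\mathbf F}(p)=\{y:p\in\mathbf F_y\}$; $\gamma\gg\delta$ means every nonempty $D\in\delta$ contains some nonempty $G\in\gamma$. The standard foliage tree $\mathbf S$ has skeleton $(\omega^{<\omega},\subsetneq)$ and leaves $\mathbf S_x=\{p\in\omega^\omega:x\subseteq p\}$; the Baire space is $\omega^\omega$ with the product topology ($\omega$ discrete). $A\subseteq\omega^\omega$ is $\pi$-dense at $x\in\omega^{<\omega}$ iff for every $y\in\omega^{<\omega}$ with $y\supseteq x$ the set $\{n\in\omega:\mathbf S_{y^\frown\langle n\rangle}\subseteq A\}$ is infinite. A foliage graft for a nonincreasing foliage tree $\mathbf F$ is a nonincreasing foliage tree $\mathbf G$ whose skeleton is a graft for the skeleton of $\mathbf F$, with $\mathbf G_{0_{\mathbf G}}\subseteq\mathbf F_{0_{\mathbf G}}$ and $\mathbf G_m=\mathbf F_m$ for all $m\in\max\mathbf G$; $\mathrm{cut}(\mathbf F,\mathbf G)=\mathbf F_{0_{\mathbf G}}\setminus\mathbf G_{0_{\mathbf G}}$. $\mathbf G$ preserves shoots of $\mathbf F$ iff for each $p\in\mathrm{flesh}\,\mathbf G$ and each $y\in\mathrm{scope}_{\mathbf F}(p)\cap(\{0_{\mathbf G}\}\cup\mathrm{expl}(\mathbf F,\mathbf G))$ there is $x\in\mathrm{scope}_{\mathbf G}(p)\cap(\{0_{\mathbf G}\}\cup\mathrm{impl}\,\mathbf G)$ with $\mathrm{shoot}_{\mathbf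 G}(x)\gg\mathrm{shoot}_{\mathbf F}(y)$ (implant and explant refer to skeletons). *)

theory Defs
  imports "HOL-Analysis.Analysis" "HOL-Library.Sublist"
begin

type_synonym 'a tree = "'a set \<times> ('a \<Rightarrow> 'a \<Rightarrow> bool)"

definition nodes :: "'a tree \<Rightarrow> 'a set" where "nodes T = fst T"
definition lt :: "'a tree \<Rightarrow> 'a \<Rightarrow> 'a \<Rightarrow> bool" where "lt T = snd T"
definition le :: "'a tree \<Rightarrow> 'a \<Rightarrow> 'a \<Rightarrow> bool" where "le T x y \<longleftrightarrow> x = y \<or> lt T x y"

definition preds :: "'a tree \<Rightarrow> 'a \<Rightarrow> 'a set" where
  "preds T x = {y \<in> nodes T. lt T y x}"

definition is_tree :: "'a tree \<Rightarrow> bool" where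
  "is_tree T \<longleftrightarrow>
     (\<forall>x y. lt T x y \<longrightarrow> x \<in> nodes T \<and> y \<in> nodes T) \<and>
     (\<forall>x \<in> nodes T. \<not> lt T x x) \<and>
     (\<forall>x \<in> nodes T. \<forall>y \<in> nodes T. \<forall>z \<in> nodes T. lt T x y \<longrightarrow> lt T y z \<longrightarrow> lt T x z) \<and>
     (\<forall>x \<in> nodes T.
        (\<forall>a \<in> preds T x. \<forall>b \<in> preds T x. a \<noteq> b \<longrightarrow> lt T a b \<or> lt T b a) \<and>
        (\<forall>B. B \<subseteq> preds T x \<longrightarrow> B \<noteq> {} \<longrightarrow> (\<exists>m \<in> B. \<forall>b \<in> B. \<not> lt T b m)))"

definition sons :: "'a tree \<Rightarrow> 'a \<Rightarrow> 'a set" where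
  "sons T x = {y \<in> nodes T. lt T x y \<and> \<not> (\<exists>z \<in> nodes T. lt T x z \<and> lt T z y)}"

definition maxnodes :: "'a tree \<Rightarrow> 'a set" where
  "maxnodes T = {x \<in> nodes T. \<not> (\<exists>y \<in> nodes T. lt T x y)}"

definition is_least :: "'a tree \<Rightarrow> 'a \<Rightarrow> bool" where
  "is_least T r \<longleftrightarrow> r \<in> nodes T \<and> (\<forall>x \<in> nodes T. le T r x)"

definition root :: "'a tree \<Rightarrow> 'a" where
  "root T = (THE r. is_least T r)"

definition is_chain :: "'a tree \<Rightarrow> 'a set \<Rightarrow> bool" where
  "is_chain T C \<longleftrightarrow> C \<subseteq> nodes T \<and> (\<forall>a \<in> C. \<forall>b \<in> C. a \<noteq> b \<longrightarrow> lt T a b \<or> lt T b a)"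

definition bounded_chains :: "'a tree \<Rightarrow> bool" where
  "bounded_chains T \<longleftrightarrow>
     (\<forall>C. is_chain T C \<longrightarrow> C \<noteq> {} \<longrightarrow> (\<exists>u \<in> nodes T. \<forall>c \<in> C. le T c u))"

definition aleph0_branching :: "'a tree \<Rightarrow> bool" where
  "aleph0_branching T \<longleftrightarrow>
     (\<forall>x \<in> nodes T - maxnodes T. countable (sons T x) \<and> infinite (sons T x))"

text \<open>height T \<le> omega: no node has a predecessor set of order type omega (or
  larger), i.e. every predecessor set is finite.\<close>
definition height_le_omega :: "'a tree \<Rightarrow> bool" where
  "height_le_omega T \<longleftrightarrow> (\<forall>x \<in> nodes T. finite (preds T x))"

definition antichain :: "'a tree \<Rightarrow> 'a set \<Rightarrow> bool" where
  "antichain T A \<longleftrightarrow> (\<forall>a \<in> A. \<forall>b \<in> A. \<not> lt T a b)"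

definition upclose :: "'a tree \<Rightarrow> 'a set \<Rightarrow> 'a set" where
  "upclose T A = {v \<in> nodes T. \<exists>a \<in> A. le T a v}"

definition impl :: "'a tree \<Rightarrow> 'a set" where
  "impl G = nodes G - ({root G} \<union> maxnodes G)"

definition is_graft :: "'a tree \<Rightarrow> 'a tree \<Rightarrow> bool" where
  "is_graft T G \<longleftrightarrow>
     is_tree G \<and> (\<exists>a \<in> nodes G. \<exists>b \<in> nodes G. a \<noteq> b) \<and>
     (\<exists>r. is_least G r) \<and> root G \<in> nodes T \<and>
     maxnodes G \<subseteq> {v \<in> nodes T. lt T (root G) v} \<and>
     antichain T (maxnodes G) \<and>
     impl G \<inter> nodes T = {}"

definition expl :: "'a tree \<Rightarrow> 'a tree \<Rightarrow> 'a set" where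
  "expl T G = {v \<in> nodes T. lt T (root G) v} - upclose T (maxnodes G)"

type_synonym ('a, 'p) ftree = "'a tree \<times> ('a \<Rightarrow> 'p set)"

definition skel :: "('a, 'p) ftree \<Rightarrow> 'a tree" where "skel F = fst F"
definition leaf :: "('a, 'p) ftree \<Rightarrow> 'a \<Rightarrow> 'p set" where "leaf F = snd F"

definition is_ftree :: "('a, 'p) ftree \<Rightarrow> bool" where
  "is_ftree F \<longleftrightarrow> is_tree (skel F)"

definition nonincreasing :: "('a, 'p) ftree \<Rightarrow> bool" where
  "nonincreasing F \<longleftrightarrow>
     (\<forall>x \<in> nodes (skel F). \<forall>y \<in> nodes (skel F). le (skel F) x y \<longrightarrow> leaf F y \<subseteq> leaf F x)"

definition locally_strict :: "('a, 'p) ftree \<Rightarrow> bool" where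
  "locally_strict F \<longleftrightarrow>
     (\<forall>x \<in> nodes (skel F) - maxnodes (skel F).
        leaf F x = (\<Union>s \<in> sons (skel F) x. leaf F s) \<and>
        disjoint_family_on (leaf F) (sons (skel F) x))"

definition open_ftree :: "('a, 'p::topological_space) ftree \<Rightarrow> bool" where
  "open_ftree F \<longleftrightarrow> (\<forall>x \<in> nodes (skel F). open (leaf F x))"

definition flesh :: "('a, 'p) ftree \<Rightarrow> 'p set" where
  "flesh F = (\<Union>x \<in> nodes (skel F). leaf F x)"

definition shoot :: "('a, 'p) ftree \<Rightarrow> 'a \<Rightarrow> 'p set set" where
  "shoot F z = {(\<Union>s \<in> C. leaf F s) | C. C \<subseteq> sons (skel F) z \<and> finite (sons (skel F) z - C)}"

definition scope :: "('a, 'p) ftree \<Rightarrow> 'p \<Rightarrow> 'a set" where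
  "scope F p = {y \<in> nodes (skel F). p \<in> leaf F y}"

definition gg :: "'p set set \<Rightarrow> 'p set set \<Rightarrow> bool" where
  "gg \<gamma> \<delta> \<longleftrightarrow> (\<forall>D \<in> \<delta>. D \<noteq> {} \<longrightarrow> (\<exists>G \<in> \<gamma>. G \<noteq> {} \<and> G \<subseteq> D))"

definition foliage_graft :: "('a, 'p) ftree \<Rightarrow> ('a, 'p) ftree \<Rightarrow> bool" where
  "foliage_graft F G \<longleftrightarrow>
     is_ftree G \<and> nonincreasing G \<and> is_graft (skel F) (skel G) \<and>
     leaf G (root (skel G)) \<subseteq> leaf F (root (skel G)) \<and>
     (\<forall>m \<in> maxnodes (skel G). leaf G m = leaf F m)"

definition cut :: "('a, 'p) ftree \<Rightarrow> ('a, 'p) ftree \<Rightarrow> 'p set" where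
  "cut F G = leaf F (root (skel G)) - leaf G (root (skel G))"

definition preserves_shoots :: "('a, 'p) ftree \<Rightarrow> ('a, 'p) ftree \<Rightarrow> bool" where
  "preserves_shoots F G \<longleftrightarrow>
     (\<forall>p \<in> flesh G. \<forall>y \<in> scope F p \<inter> ({root (skel G)} \<union> expl (skel F) (skel G)).
        \<exists>x \<in> scope G p \<inter> ({root (skel G)} \<union> impl (skel G)).
          gg (shoot G x) (shoot F y))"

text \<open>The standard foliage tree S. Nodes of the ambient node type
  nat list + nat: the nodes of S are the Inl x (x in omega^{<omega}); the
  right summand supplies fresh nodes for implants of grafts.\<close>
type_synonym node = "nat list + nat"

definition S_lt :: "node \<Rightarrow> node \<Rightarrow> bool" where
  "S_lt a b = (case (a, b) of (Inl x, Inl y) \<Rightarrow> strict_prefix x y | _ \<Rightarrow> False)"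

definition cyl :: "nat list \<Rightarrow> (nat \<Rightarrow> nat) set" where
  "cyl x = {p. \<forall>i < length x. p i = x ! i}"

definition S_leaf :: "node \<Rightarrow> (nat \<Rightarrow> nat) set" where
  "S_leaf a = (case a of Inl x \<Rightarrow> cyl x | Inr _ \<Rightarrow> {})"

definition S :: "(node, nat \<Rightarrow> nat) ftree" where
  "S = ((range Inl, S_lt), S_leaf)"

definition pi_dense_at :: "(nat \<Rightarrow> nat) set \<Rightarrow> nat list \<Rightarrow> bool" where
  "pi_dense_at A x \<longleftrightarrow> (\<forall>y. prefix x y \<longrightarrow> infinite {n. cyl (y @ [n]) \<subseteq> A})"

end

theory Submission
  imports Defs
begin


lemma cyl_iff: "p \<in> cyl x \<longleftrightarrow> x = map p [0..<length x]"
proof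
  assume "p \<in> cyl x" then show "x = map p [0..<length x]"
    by (intro nth_equalityI) (auto simp: cyl_def)
next
  assume e: "x = map p [0..<length x]"
  show "p \<in> cyl x" unfolding cyl_def
  proof (intro CollectI allI impI)
    fix i assume i: "i < length x"
    have "x ! i = map p [0..<length x] ! i" using arg_cong[OF e, of "\<lambda>l. l ! i"] .
    then show "p i = x ! i" using i by simp
  qed
qed

lemma cyl_mono: "prefix x y \<Longrightarrow> cyl y \<subseteq> cyl x"
  unfolding cyl_def by (auto simp: prefix_def nth_append)

lemma cyl_ne: "cyl x \<noteq> {}"
proof -
  have "(\<lambda>i. if i < length x then x ! i else 0) \<in> cyl x" unfolding cyl_def by auto
  then show ?thesis by auto
qed

lemma cyl_comparable: "p \<in> cyl x \<Longrightarrow> p \<in> cyl y \<Longrightarrow> prefix x y \<or> prefix y x"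
proof -
  assume a: "p \<in> cyl x" "p \<in> cyl y"
  have x: "x = map p [0..<length x]" and y: "y = map p [0..<length y]" using a cyl_iff by auto
  have *: "take (length a) b = a" if "a = map p [0..<length a]" "b = map p [0..<length b]" "length a \<le> length b" for a b
  proof -
    have "take (length a) [0..<length b] = [0..<length a]" using that(3) by (simp add: take_upt)
    then show ?thesis using that(1,2) by (metis take_map)
  qed
  show ?thesis
  proof (cases "length x \<le> length y")
    case True
    have e: "take (length x) y = x" using *[OF x y True] .
    have "prefix (take (length x) y) y" by (rule take_is_prefix)
    then show ?thesis using e by simp
  next
    case False
    have e: "take (length y) x = y" using *[OF y x] False by simp
    have "prefix (take (length y) x) x" by (rule take_is_prefix)
    then show ?thesis using e by simp
  qed
qed

lemma cyl_snoc_disj: "n \<noteq> n' \<Longrightarrow> cyl (u @ [n]) \<inter> cyl (u @ [n']) = {}"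
proof (rule ccontr)
  assume "n \<noteq> n'" "cyl (u @ [n]) \<inter> cyl (u @ [n']) \<noteq> {}"
  then obtain p where "p \<in> cyl (u @ [n])" "p \<in> cyl (u @ [n'])" by auto
  then have "p (length u) = n" "p (length u) = n'" unfolding cyl_def
    by (auto dest!: spec[of _ "length u"])
  then show False using \<open>n \<noteq> n'\<close> by simp
qed

lemma open_cyl: "open (cyl x)"
proof -
  have "cyl x = {f. \<forall>i\<in>{..<length x}. f (id i) \<in> {x ! i}}" unfolding cyl_def by auto
  moreover have "open {f::nat\<Rightarrow>nat. \<forall>i\<in>{..<length x}. f (id i) \<in> {x ! i}}"
    by (rule product_topology_basis') (auto simp: open_discrete)
  ultimately show ?thesis by simp
qed

lemma open_contains_cyl:
  fixes U :: "(nat \<Rightarrow> nat) set"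
  assumes "open U" "p \<in> U"
  shows "\<exists>N. \<forall>N'\<ge>N. cyl (map p [0..<N']) \<subseteq> U"
proof -
  have "openin (product_topology (\<lambda>i. euclidean) UNIV) U" using assms unfolding open_fun_def by simp
  from product_topology_open_contains_basis[OF this assms(2)]
  obtain X where H: "p \<in> (\<Pi>\<^sub>E i\<in>UNIV. X i)" "finite {i. X i \<noteq> topspace euclidean}" "(\<Pi>\<^sub>E i\<in>UNIV. X i) \<subseteq> U"
    by blast
  have H2: "finite {i. X i \<noteq> UNIV}" using H(2) by simp
  obtain N where N: "{i. X i \<noteq> UNIV} \<subseteq> {..<N}"
    using finite_nat_bounded[OF H2] by blast
  have "cyl (map p [0..<N']) \<subseteq> U" if "N' \<ge> N" for N'
  proof
    fix q assume q: "q \<in> cyl (map p [0..<N'])"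
    have "q i \<in> X i" for i
    proof (cases "i < N")
      case True
      then have "q i = p i" using q that unfolding cyl_def by simp
      moreover have "p i \<in> X i" using H(1) unfolding PiE_UNIV_domain by blast
      ultimately show ?thesis by simp
    next
      case False then have "X i = UNIV" using N by blast
      then show ?thesis by simp
    qed
    then have "q \<in> (\<Pi>\<^sub>E i\<in>UNIV. X i)" unfolding PiE_UNIV_domain by blast
    then show "q \<in> U" using H(3) by blast
  qed
  then show ?thesis by blast
qed




locale constr =
  fixes v :: "nat list" and U :: "(nat \<Rightarrow> nat) set"
  assumes Usub: "U \<subseteq> cyl v" and Une: "\<not> cyl v \<subseteq> U" and Uopen: "open U"
    and dense: "pi_dense_at U v"
begin

definition E where "E = {u. prefix v u \<and> \<not> cyl u \<subseteq> U}"
definition A where "A u = {n. cyl (u @ [n]) \<subseteq> U}"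
definition M where "M = {u @ [n] | u n. u \<in> E \<and> n \<in> A u}"
definition col where "col u n = fst (prod_decode (to_nat_on (A u) n)) + (length u - length v) + 1"
definition c where "c m = col (butlast m) (last m)"

lemma v_E: "v \<in> E" using Une unfolding E_def by auto

lemma A_inf: "u \<in> E \<Longrightarrow> infinite (A u)"
  using dense unfolding pi_dense_at_def E_def A_def by auto

lemma E_prefix: "u \<in> E \<Longrightarrow> prefix v w \<Longrightarrow> prefix w u \<Longrightarrow> w \<in> E"
  unfolding E_def using cyl_mono by blast

lemma sp_snoc: "strict_prefix u (u @ [n])"
  unfolding strict_prefix_def by simp

lemma M_D: assumes "m \<in> M"
  shows "m = butlast m @ [last m]" "butlast m \<in> E" "last m \<in> A (butlast m)" "cyl m \<subseteq> U"
    "strict_prefix v m" "prefix v (butlast m)"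
proof -
  obtain u n where m: "m = u @ [n]" "u \<in> E" "n \<in> A u" using assms unfolding M_def by auto
  have b: "butlast m = u" "last m = n" using m(1) by simp_all
  show "m = butlast m @ [last m]" using b m(1) by simp
  show "butlast m \<in> E" using b m(2) by simp
  show "last m \<in> A (butlast m)" using b m(3) by simp
  have pv: "prefix v u" using m(2) unfolding E_def by simp
  then show "prefix v (butlast m)" using b by simp
  show "cyl m \<subseteq> U" using m(1,3) unfolding A_def by simp
  show "strict_prefix v m" using pv sp_snoc[of u n] m(1) prefix_order.le_less_trans by blast
qed

lemma M_I: "u \<in> E \<Longrightarrow> n \<in> A u \<Longrightarrow> u @ [n] \<in> M"
  unfolding M_def by auto

lemma M_obt: assumes "m \<in> M" obtains u n where "m = u @ [n]" "u \<in> E" "n \<in> A u"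
  using assms unfolding M_def by auto

lemma M_E_not_prefix: "m \<in> M \<Longrightarrow> u \<in> E \<Longrightarrow> \<not> prefix m u"
  using M_D(4) cyl_mono unfolding E_def by blast

lemma M_antichain: assumes "m \<in> M" "m' \<in> M" "prefix m m'" shows "m = m'"
proof -
  obtain u n where m': "m' = u @ [n]" "u \<in> E" "n \<in> A u" using M_obt[OF assms(2)] by blast
  have "prefix m (u @ [n])" using assms(3) m'(1) by simp
  then have "m = u @ [n] \<or> prefix m u" by simp
  then show ?thesis using M_E_not_prefix[OF assms(1) m'(2)] m'(1) by blast
qed

lemma M_unique: assumes "m \<in> M" "m' \<in> M" "p \<in> cyl m" "p \<in> cyl m'" shows "m = m'"
proof -
  have "prefix m m' \<or> prefix m' m" using cyl_comparable[OF assms(3,4)] .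
  then show ?thesis using M_antichain[OF assms(1,2)] M_antichain[OF assms(2,1)] by blast
qed

lemma sp_M: assumes "m \<in> M" shows "strict_prefix u m \<longleftrightarrow> prefix u (butlast m)"
proof -
  obtain w n where m: "m = w @ [n]" "w \<in> E" "n \<in> A w" using M_obt[OF assms] by blast
  have "strict_prefix u (w @ [n]) \<longleftrightarrow> prefix u w"
  proof
    assume "strict_prefix u (w @ [n])"
    then have "prefix u (w @ [n])" "u \<noteq> w @ [n]" by (auto simp: strict_prefix_def)
    then show "prefix u w" by simp
  next
    assume "prefix u w"
    then show "strict_prefix u (w @ [n])" using sp_snoc[of w n] prefix_order.le_less_trans by blast
  qed
  then show ?thesis using m(1) by simp
qed

lemma c_bound: "m \<in> M \<Longrightarrow> length (butlast m) - length v < c m"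
  unfolding c_def col_def by simp

lemma c_bound2: assumes m: "m \<in> M" shows "length m \<le> length v + c m"
proof -
  obtain w n where mm: "m = w @ [n]" "w \<in> E" "n \<in> A w" using M_obt[OF m] by blast
  have "length v \<le> length w" using mm(2) prefix_length_le unfolding E_def by blast
  moreover have "length w - length v < c m" using c_bound[OF m] mm(1) by simp
  ultimately show ?thesis using mm(1) by simp
qed

lemma bucket_inf: assumes "u \<in> E" "length u - length v < k"
  shows "infinite {n \<in> A u. col u n = k}"
proof -
  define j where "j = k - (length u - length v) - 1"
  define f where "f t = from_nat_into (A u) (prod_encode (j, t))" for t
  have ci: "countable (A u)" by simp
  have ii: "infinite (A u)" using A_inf[OF assms(1)] .
  have inj: "inj f"
  proof
    fix a b assume "f a = f b"
    then have "to_nat_on (A u) (f a) = to_nat_on (A u) (f b)" by simp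
    then have "prod_encode (j, a) = prod_encode (j, b)" unfolding f_def using ci ii by simp
    then show "a = b" using prod_encode_eq by simp
  qed
  have "range f \<subseteq> {n \<in> A u. col u n = k}"
  proof
    fix x assume "x \<in> range f"
    then obtain t where x: "x = f t" by auto
    have "A u \<noteq> {}" using ii by auto
    then have "x \<in> A u" unfolding x f_def by (rule from_nat_into)
    moreover have "col u x = k" unfolding x f_def col_def j_def using ci ii assms(2) by simp
    ultimately show "x \<in> {n \<in> A u. col u n = k}" by simp
  qed
  moreover have "infinite (range f)" using inj range_inj_infinite by blast
  ultimately show ?thesis using finite_subset by blast
qed

lemma cover: assumes "p \<in> U" shows "\<exists>m\<in>M. p \<in> cyl m"
proof -
  obtain N where N: "\<forall>N'\<ge>N. cyl (map p [0..<N']) \<subseteq> U" using open_contains_cyl[OF Uopen assms] by blast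
  have pv: "v = map p [0..<length v]" using assms Usub cyl_iff by blast
  have "\<forall>j. length v \<le> j \<longrightarrow> cyl (map p [0..<j]) \<subseteq> U \<longrightarrow> (\<exists>m\<in>M. p \<in> cyl m)"
  proof
    fix j show "length v \<le> j \<longrightarrow> cyl (map p [0..<j]) \<subseteq> U \<longrightarrow> (\<exists>m\<in>M. p \<in> cyl m)"
    proof (induction j)
      case 0
      then show ?case using pv Une by auto
    next
      case (Suc j)
      show ?case
      proof (intro impI)
        assume h: "length v \<le> Suc j" "cyl (map p [0..<Suc j]) \<subseteq> U"
        show "\<exists>m\<in>M. p \<in> cyl m"
        proof (cases "length v \<le> j \<and> cyl (map p [0..<j]) \<subseteq> U")
          case True then show ?thesis using Suc.IH by blast
        next
          case False
          have lv: "length v \<le> j"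
          proof (rule ccontr)
            assume "\<not> length v \<le> j"
            then have "Suc j = length v" using h by simp
            then show False using h(2) pv Une by simp
          qed
          then have nu: "\<not> cyl (map p [0..<j]) \<subseteq> U" using False by simp
          have pre: "prefix v (map p [0..<j])"
          proof -
            have "take (length v) [0..<j] = [0..<length v]" using lv by (simp add: take_upt)
            then have "take (length v) (map p [0..<j]) = v" using pv by (metis take_map)
            moreover have "prefix (take (length v) (map p [0..<j])) (map p [0..<j])" by (rule take_is_prefix)
            ultimately show ?thesis by simp
          qed
          have uE: "map p [0..<j] \<in> E" using pre nu unfolding E_def by simp
          have eq: "map p [0..<Suc j] = map p [0..<j] @ [p j]" by simp
          have "p j \<in> A (map p [0..<j])" using h(2) eq unfolding A_def by simp
          then have "map p [0..<Suc j] \<in> M" using M_I[OF uE] eq by simp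
          moreover have "p \<in> cyl (map p [0..<Suc j])" by (simp only: cyl_iff length_map length_upt diff_zero)
          ultimately show ?thesis by blast
        qed
      qed
    qed
  qed
  then show ?thesis using N[rule_format, of "max N (length v)"] by (meson max.cobounded1 max.cobounded2)
qed

end



lemma tree_irrefl: "is_tree T \<Longrightarrow> \<forall>x \<in> nodes T. \<not> lt T x x"
  unfolding is_tree_def by (elim conjE) assumption

lemma tree_trans: "is_tree T \<Longrightarrow> \<forall>x \<in> nodes T. \<forall>y \<in> nodes T. \<forall>z \<in> nodes T. lt T x y \<longrightarrow> lt T y z \<longrightarrow> lt T x z"
  unfolding is_tree_def by (elim conjE) assumption

lemma root_eq: assumes "is_tree T" "is_least T r" shows "root T = r"
  unfolding root_def
proof (rule the_equality)
  show "is_least T r" by fact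
  fix r' assume r': "is_least T r'"
  show "r' = r"
  proof (rule ccontr)
    assume ne: "r' \<noteq> r"
    have n: "r \<in> nodes T" "r' \<in> nodes T" using assms(2) r' unfolding is_least_def by auto
    have "le T r r'" "le T r' r" using assms(2) r' n unfolding is_least_def by auto
    then have "lt T r r'" "lt T r' r" using ne unfolding le_def by auto
    then have "lt T r r" using tree_trans[OF assms(1)] n by blast
    then show False using tree_irrefl[OF assms(1)] n by blast
  qed
qed

lemma S_simps: "skel S = (range Inl, S_lt)" "leaf S = S_leaf" "nodes (range Inl, S_lt) = range Inl"
  "lt (range Inl, S_lt) = S_lt"
  by (auto simp: S_def skel_def leaf_def nodes_def lt_def)

lemma S_lt_simps[simp]: "S_lt (Inl a) (Inl b) = strict_prefix a b" "S_lt (Inr j) x = False" "S_lt x (Inr j) = False"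
  by (auto simp: S_lt_def split: sum.splits)

lemma S_leaf_simps[simp]: "S_leaf (Inl a) = cyl a" "S_leaf (Inr j) = {}"
  by (auto simp: S_leaf_def)

context constr
begin

definition V where "V = {(u,k). u \<in> E \<and> length u - length v < k}"
definition nd :: "nat list \<Rightarrow> nat \<Rightarrow> node" where "nd u k = Inr (to_nat (u,k))"
definition L where "L u k = \<Union>{cyl m | m. m \<in> M \<and> strict_prefix u m \<and> c m = k}"
definition N where "N = insert (Inl v) ((\<lambda>(u,k). nd u k) ` V \<union> Inl ` M)"
definition Glt where "Glt a b \<longleftrightarrow> (a = Inl v \<and> b \<in> N \<and> b \<noteq> Inl v) \<or>
  (\<exists>u u' k. a = nd u k \<and> b = nd u' k \<and> (u,k) \<in> V \<and> (u',k) \<in> V \<and> strict_prefix u u') \<or>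
  (\<exists>u k m. a = nd u k \<and> b = Inl m \<and> (u,k) \<in> V \<and> m \<in> M \<and> strict_prefix u m \<and> c m = k)"
definition Gleaf where "Gleaf x = (if x = Inl v then U else (case x of Inl w \<Rightarrow> cyl w
   | Inr j \<Rightarrow> (case from_nat j :: nat list \<times> nat of (u,k) \<Rightarrow> L u k)))"
definition T where "T = (N, Glt)"
definition G where "G = (T, Gleaf)"

definition h :: "node \<Rightarrow> nat" where
  "h x = (case x of Inl w \<Rightarrow> 2 * length w | Inr j \<Rightarrow> 2 * length (fst (from_nat j :: nat list \<times> nat)) + 1)"
definition key :: "node \<Rightarrow> nat" where
  "key x = (case x of Inl w \<Rightarrow> c w | Inr j \<Rightarrow> snd (from_nat j :: nat list \<times> nat))"

lemma nd_inj[simp]: "nd u k = nd u' k' \<longleftrightarrow> u = u' \<and> k = k'"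
  unfolding nd_def by auto
lemma nd_Inl[simp]: "nd u k \<noteq> Inl w" "Inl w \<noteq> nd u k"
  unfolding nd_def by auto
lemma h_nd[simp]: "h (nd u k) = 2 * length u + 1" unfolding h_def nd_def by simp
lemma h_Inl[simp]: "h (Inl w) = 2 * length w" unfolding h_def by simp
lemma key_nd[simp]: "key (nd u k) = k" unfolding key_def nd_def by simp
lemma key_Inl[simp]: "key (Inl w) = c w" unfolding key_def by simp
lemma Gleaf_nd[simp]: "Gleaf (nd u k) = L u k" unfolding Gleaf_def nd_def by simp
lemma T_simps[simp]: "nodes T = N" "lt T = Glt" "skel G = T" "leaf G = Gleaf"
  by (auto simp: T_def G_def nodes_def lt_def skel_def leaf_def)

lemma M_ne_v: "m \<in> M \<Longrightarrow> m \<noteq> v"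
  using M_D(5) by auto
lemma Gleaf_Inl[simp]: "m \<in> M \<Longrightarrow> Gleaf (Inl m) = cyl m"
  unfolding Gleaf_def using M_ne_v by auto
lemma Gleaf_v[simp]: "Gleaf (Inl v) = U" unfolding Gleaf_def by simp

lemma V_D: "(u,k) \<in> V \<Longrightarrow> u \<in> E \<and> prefix v u \<and> length u - length v < k \<and> 0 < k"
  unfolding V_def E_def by auto

lemma N_cases: "x \<in> N \<Longrightarrow> x = Inl v \<or> (\<exists>u k. x = nd u k \<and> (u,k) \<in> V) \<or> (\<exists>m. x = Inl m \<and> m \<in> M)"
  unfolding N_def by auto

lemma nd_N: "(u,k) \<in> V \<Longrightarrow> nd u k \<in> N" unfolding N_def by auto
lemma Inl_N: "m \<in> M \<Longrightarrow> Inl m \<in> N" unfolding N_def by auto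
lemma v_N: "Inl v \<in> N" unfolding N_def by auto

lemma Glt_N: "Glt a b \<Longrightarrow> a \<in> N \<and> b \<in> N"
  unfolding Glt_def using v_N nd_N Inl_N by blast

lemma sp_len: "strict_prefix a b \<Longrightarrow> length a < length b"
  by (simp add: prefix_length_less)

lemma Glt_h: "Glt a b \<Longrightarrow> h a < h b"
proof -
  assume g: "Glt a b"
  show ?thesis
  proof (cases "a = Inl v")
    case True
    then have b: "b \<in> N" "b \<noteq> Inl v" using g unfolding Glt_def by auto
    from N_cases[OF b(1)] b(2) show ?thesis
    proof (elim disjE exE conjE)
      fix u k assume "b = nd u k" "(u,k) \<in> V"
      then show ?thesis using True V_D prefix_length_le by fastforce
    next
      fix m assume "b = Inl m" "m \<in> M"
      then show ?thesis using True M_D(5) sp_len by fastforce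
    qed auto
  next
    case False
    then show ?thesis using g sp_len unfolding Glt_def by fastforce
  qed
qed

lemma Glt_irrefl: "\<not> Glt a a" using Glt_h by blast

lemma Glt_not_Inl_src: "Glt (Inl m) b \<Longrightarrow> m = v"
  unfolding Glt_def by auto

lemma Glt_not_root_tgt: "\<not> Glt a (Inl v)"
  unfolding Glt_def using M_ne_v by auto

lemma Glt_key: "Glt a b \<Longrightarrow> a \<noteq> Inl v \<Longrightarrow> key a = key b"
  unfolding Glt_def by auto

lemma Glt_src: "Glt a b \<Longrightarrow> a \<noteq> Inl v \<Longrightarrow>
   (\<exists>u u' k. a = nd u k \<and> b = nd u' k \<and> (u,k) \<in> V \<and> (u',k) \<in> V \<and> strict_prefix u u') \<or>
   (\<exists>u k m. a = nd u k \<and> b = Inl m \<and> (u,k) \<in> V \<and> m \<in> M \<and> strict_prefix u m \<and> c m = k)"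
  unfolding Glt_def by blast

lemma Glt_trans: assumes "Glt a b" "Glt b d" shows "Glt a d"
proof (cases "a = Inl v")
  case True
  have "d \<in> N" "d \<noteq> Inl v" using Glt_N[OF assms(2)] Glt_not_root_tgt[of b] assms(2) by auto
  then show ?thesis unfolding Glt_def using True by blast
next
  case False
  from Glt_src[OF assms(1) False] show ?thesis
  proof (elim disjE exE conjE)
    fix u u' k assume a: "a = nd u k" "b = nd u' k" "(u,k) \<in> V" "(u',k) \<in> V" "strict_prefix u u'"
    have bv: "b \<noteq> Inl v" using a(2) by simp
    from Glt_src[OF assms(2) bv] show ?thesis
    proof (elim disjE exE conjE)
      fix w w' k' assume b: "b = nd w k'" "d = nd w' k'" "(w,k') \<in> V" "(w',k') \<in> V" "strict_prefix w w'"
      have "w = u'" "k' = k" using a(2) b(1) by auto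
      then have "strict_prefix u w'" using a(5) b(5) prefix_order.less_trans by blast
      then show ?thesis unfolding Glt_def using a b \<open>k' = k\<close> by blast
    next
      fix w k' m assume b: "b = nd w k'" "d = Inl m" "(w,k') \<in> V" "m \<in> M" "strict_prefix w m" "c m = k'"
      have "w = u'" "k' = k" using a(2) b(1) by auto
      then have "strict_prefix u m" using a(5) b(5) prefix_order.less_trans by blast
      then show ?thesis unfolding Glt_def using a b \<open>k' = k\<close> by blast
    qed
  next
    fix u k m assume a: "a = nd u k" "b = Inl m" "(u,k) \<in> V" "m \<in> M" "strict_prefix u m" "c m = k"
    have "m = v" using Glt_not_Inl_src assms(2) a(2) by blast
    then show ?thesis using M_ne_v a(4) by blast
  qed
qed

lemma bump_ex: assumes "\<exists>m. P m" shows "\<exists>m. P m \<and> (\<forall>m'. P m' \<longrightarrow> (f::_\<Rightarrow>nat) m \<le> f m')"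
proof -
  obtain k where "P k" using assms by blast
  from ex_has_least_nat[of P k f, OF this] show ?thesis by blast
qed

definition lst :: "node \<Rightarrow> nat list" where
  "lst x = (case x of Inl w \<Rightarrow> w | Inr j \<Rightarrow> fst (from_nat j :: nat list \<times> nat))"
lemma lst_simps[simp]: "lst (nd u k) = u" "lst (Inl w) = w" unfolding lst_def nd_def by simp_all

lemma preds_sub: assumes "x \<in> N" shows "{y \<in> N. Glt y x} \<subseteq> insert (Inl v) ((\<lambda>u'. nd u' (key x)) ` {u'. prefix u' (lst x)})"
proof
  fix y assume y: "y \<in> {y \<in> N. Glt y x}"
  show "y \<in> insert (Inl v) ((\<lambda>u'. nd u' (key x)) ` {u'. prefix u' (lst x)})"
  proof (cases "y = Inl v")
    case False
    from Glt_src[OF _ False] y have "(\<exists>u u' k. y = nd u k \<and> x = nd u' k \<and> (u,k) \<in> V \<and> (u',k) \<in> V \<and> strict_prefix u u') \<or>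
   (\<exists>u k m. y = nd u k \<and> x = Inl m \<and> (u,k) \<in> V \<and> m \<in> M \<and> strict_prefix u m \<and> c m = k)" by blast
    then show ?thesis
    proof (elim disjE exE conjE)
      fix u u' k assume "y = nd u k" "x = nd u' k" "strict_prefix u u'"
      then show ?thesis by (auto simp: strict_prefix_def)
    next
      fix u k m assume "y = nd u k" "x = Inl m" "strict_prefix u m" "c m = k"
      then show ?thesis by (auto simp: strict_prefix_def)
    qed
  qed simp
qed

lemma preds_fin: "x \<in> N \<Longrightarrow> finite {y \<in> N. Glt y x}"
proof -
  assume x: "x \<in> N"
  have "{u'. prefix u' (lst x)} = set (prefixes (lst x))" by auto
  then have "finite {u'. prefix u' (lst x)}" by simp
  then show ?thesis using preds_sub[OF x] finite_subset by blast
qed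

lemma Glt_src2: assumes "Glt y x" "y \<noteq> Inl v"
  shows "\<exists>u. y = nd u (key x) \<and> (u, key x) \<in> V \<and> strict_prefix u (lst x)"
  using Glt_src[OF assms] by auto

lemma Glt_ndI: "(u,k) \<in> V \<Longrightarrow> (u',k) \<in> V \<Longrightarrow> strict_prefix u u' \<Longrightarrow> Glt (nd u k) (nd u' k)"
  unfolding Glt_def by blast

lemma Glt_rootI: "y \<in> N \<Longrightarrow> y \<noteq> Inl v \<Longrightarrow> Glt (Inl v) y"
  unfolding Glt_def by blast

lemma preds_lin: assumes "Glt y1 x" "Glt y2 x" "y1 \<noteq> y2" shows "Glt y1 y2 \<or> Glt y2 y1"
proof (cases "y1 = Inl v \<or> y2 = Inl v")
  case True
  then show ?thesis using assms Glt_N Glt_rootI by metis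
next
  case False
  obtain u1 where 1: "y1 = nd u1 (key x)" "(u1, key x) \<in> V" "strict_prefix u1 (lst x)"
    using Glt_src2[OF assms(1)] False by blast
  obtain u2 where 2: "y2 = nd u2 (key x)" "(u2, key x) \<in> V" "strict_prefix u2 (lst x)"
    using Glt_src2[OF assms(2)] False by blast
  have z: "prefix u1 (lst x)" "prefix u2 (lst x)" using 1(3) 2(3) by (auto simp: strict_prefix_def)
  have "u1 \<noteq> u2" using assms(3) 1 2 by auto
  then have "strict_prefix u1 u2 \<or> strict_prefix u2 u1" using prefix_same_cases[OF z]
    by (auto simp: strict_prefix_def)
  then show ?thesis using 1 2 Glt_ndI by metis
qed

lemma is_tree_T: "is_tree T"
  unfolding is_tree_def preds_def T_simps
proof (intro conjI allI impI ballI)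
  fix x y assume "Glt x y" then show "x \<in> N" "y \<in> N" using Glt_N by auto
next
  fix x show "\<not> Glt x x" by (rule Glt_irrefl)
next
  fix x y z assume "Glt x y" "Glt y z" then show "Glt x z" by (rule Glt_trans)
next
  fix x a b assume "a \<in> {y \<in> N. Glt y x}" "b \<in> {y \<in> N. Glt y x}" "a \<noteq> b"
  then show "Glt a b \<or> Glt b a" using preds_lin by auto
next
  fix x B assume B: "B \<subseteq> {y \<in> N. Glt y x}" "B \<noteq> {}"
  then obtain m where m: "m \<in> B" "\<forall>m'. m' \<in> B \<longrightarrow> h m \<le> h m'" using bump_ex[of "\<lambda>m. m \<in> B" h] by auto
  show "\<exists>m\<in>B. \<forall>b\<in>B. \<not> Glt b m"
  proof (intro bexI[of _ m] ballI notI)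
    fix b assume "b \<in> B" "Glt b m"
    then have "h b < h m" "h m \<le> h b" using Glt_h m(2) by auto
    then show False by simp
  qed (rule m(1))
qed

lemma least_T: "is_least T (Inl v)"
  unfolding is_least_def le_def using v_N Glt_def by auto

lemma root_T: "root T = Inl v"
  using root_eq[OF is_tree_T least_T] .

end





context constr
begin

lemma c_snoc[simp]: "c (u @ [n]) = col u n" unfolding c_def by simp

lemma bucket_ex: assumes "(u,k) \<in> V" obtains n where "n \<in> A u" "col u n = k"
proof -
  have "infinite {n \<in> A u. col u n = k}" using bucket_inf V_D[OF assms] by blast
  then have "{n \<in> A u. col u n = k} \<noteq> {}" by (metis finite.emptyI)
  then show ?thesis using that by blast
qed

lemma Glt_leafI: "(u,k) \<in> V \<Longrightarrow> m \<in> M \<Longrightarrow> strict_prefix u m \<Longrightarrow> c m = k \<Longrightarrow> Glt (nd u k) (Inl m)"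
  unfolding Glt_def by blast

lemma vV: "0 < k \<Longrightarrow> (v,k) \<in> V" unfolding V_def using v_E by simp

lemma c_pos: assumes "m \<in> M" shows "0 < c m"
proof -
  have "length (butlast m) - length v < c m" using c_bound[OF assms] .
  then show ?thesis by simp
qed

lemma maxnodes_T: "maxnodes T = Inl ` M"
proof
  show "maxnodes T \<subseteq> Inl ` M"
  proof
    fix x assume x: "x \<in> maxnodes T"
    then have xN: "x \<in> N" and nx: "\<not> (\<exists>y\<in>N. Glt x y)" unfolding maxnodes_def by auto
    from N_cases[OF xN] show "x \<in> Inl ` M"
    proof (elim disjE exE conjE)
      assume "x = Inl v"
      moreover have "Glt (Inl v) (nd v 1)" using Glt_rootI[OF nd_N[OF vV]] by simp
      ultimately show ?thesis using nx nd_N[OF vV[of 1]] by simp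
    next
      fix u k assume a: "x = nd u k" "(u,k) \<in> V"
      obtain n where n: "n \<in> A u" "col u n = k" using bucket_ex[OF a(2)] by blast
      have uE: "u \<in> E" using V_D[OF a(2)] by blast
      have "Glt (nd u k) (Inl (u @ [n]))" using Glt_leafI[OF a(2) M_I[OF uE n(1)] sp_snoc] n(2) by simp
      then show ?thesis using nx a(1) Inl_N[OF M_I[OF uE n(1)]] by blast
    next
      fix m assume "x = Inl m" "m \<in> M"
      then show ?thesis by blast
    qed
  qed
next
  show "Inl ` M \<subseteq> maxnodes T"
  proof
    fix x :: node assume "x \<in> Inl ` M"
    then obtain m where m: "x = Inl m" "m \<in> M" by auto
    have "\<not> Glt (Inl m) y" for y using Glt_not_Inl_src M_ne_v[OF m(2)] by blast
    then show "x \<in> maxnodes T" unfolding maxnodes_def using m Inl_N by auto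
  qed
qed

lemma sons_root: "sons T (Inl v) = {nd v k | k. 0 < k}"
proof
  show "sons T (Inl v) \<subseteq> {nd v k | k. 0 < k}"
  proof
    fix y assume y: "y \<in> sons T (Inl v)"
    then have yN: "y \<in> N" and g: "Glt (Inl v) y" and nz: "\<not> (\<exists>z\<in>N. Glt (Inl v) z \<and> Glt z y)"
      unfolding sons_def by auto
    have yv: "y \<noteq> Inl v" using g Glt_irrefl by blast
    from N_cases[OF yN] yv show "y \<in> {nd v k | k. 0 < k}"
    proof (elim disjE exE conjE)
      fix u k assume a: "y = nd u k" "(u,k) \<in> V"
      have k: "0 < k" "prefix v u" using V_D[OF a(2)] by auto
      show ?thesis
      proof (cases "u = v")
        case True then show ?thesis using a k by auto
      next
        case False
        then have "strict_prefix v u" using k(2) by (simp add: strict_prefix_def)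
        then have "Glt (nd v k) y" using Glt_ndI[OF vV[OF k(1)] a(2)] a(1) by simp
        moreover have "Glt (Inl v) (nd v k)" using Glt_rootI nd_N[OF vV[OF k(1)]] by simp
        ultimately show ?thesis using nz nd_N[OF vV[OF k(1)]] by blast
      qed
    next
      fix m assume a: "y = Inl m" "m \<in> M"
      have "Glt (nd v (c m)) y" using Glt_leafI[OF vV[OF c_pos[OF a(2)]] a(2) M_D(5)[OF a(2)]] a(1) by simp
      moreover have "Glt (Inl v) (nd v (c m))" using Glt_rootI nd_N[OF vV[OF c_pos[OF a(2)]]] by simp
      ultimately show ?thesis using nz nd_N[OF vV[OF c_pos[OF a(2)]]] by blast
    qed simp
  qed
next
  show "{nd v k | k. 0 < k} \<subseteq> sons T (Inl v)"
  proof
    fix y assume "y \<in> {nd v k | k. 0 < k}"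
    then obtain k where y: "y = nd v k" "0 < k" by auto
    have yN: "y \<in> N" using nd_N[OF vV[OF y(2)]] y(1) by simp
    have g: "Glt (Inl v) y" using Glt_rootI yN y(1) by simp
    have nz: "\<not> Glt z y" if "Glt (Inl v) z" for z
    proof
      assume gz: "Glt z y"
      have "z \<noteq> Inl v" using Glt_not_root_tgt that by blast
      then obtain u where u: "(u, key y) \<in> V" "strict_prefix u (lst y)" using Glt_src2[OF gz] by blast
      have "prefix v u" using V_D[OF u(1)] by blast
      moreover have "strict_prefix u v" using u(2) y(1) by simp
      ultimately show False using prefix_order.leD by blast
    qed
    show "y \<in> sons T (Inl v)" unfolding sons_def using yN g nz by auto
  qed
qed

end


context constr
begin

lemma sp_len2: "strict_prefix a b \<Longrightarrow> strict_prefix b (a @ [n]) \<Longrightarrow> False"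
proof -
  assume "strict_prefix a b" "strict_prefix b (a @ [n])"
  then have "length a < length b" "length b < length (a @ [n])" using sp_len by blast+
  then show False by simp
qed

lemma sons_nd: assumes uk: "(u,k) \<in> V"
  shows "sons T (nd u k) = (\<lambda>n. Inl (u @ [n])) ` {n \<in> A u. col u n = k} \<union> (\<lambda>n. nd (u @ [n]) k) ` {n. (u @ [n], k) \<in> V}"
proof
  have uE: "u \<in> E" and pvu: "prefix v u" using V_D[OF uk] by auto
  show "sons T (nd u k) \<subseteq> (\<lambda>n. Inl (u @ [n])) ` {n \<in> A u. col u n = k} \<union> (\<lambda>n. nd (u @ [n]) k) ` {n. (u @ [n], k) \<in> V}"
  proof
    fix y assume y: "y \<in> sons T (nd u k)"
    then have yN: "y \<in> N" and g: "Glt (nd u k) y" and nz: "\<not> (\<exists>z\<in>N. Glt (nd u k) z \<and> Glt z y)"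
      unfolding sons_def by auto
    from Glt_src[OF g nd_Inl(1)] show "y \<in> (\<lambda>n. Inl (u @ [n])) ` {n \<in> A u. col u n = k} \<union> (\<lambda>n. nd (u @ [n]) k) ` {n. (u @ [n], k) \<in> V}"
    proof (elim disjE exE conjE)
      fix u0 u' k0 assume a: "nd u k = nd u0 k0" "y = nd u' k0" "(u0,k0) \<in> V" "(u',k0) \<in> V" "strict_prefix u0 u'"
      have e: "u0 = u" "k0 = k" using a(1) by auto
      obtain n rest where ur: "u' = u @ n # rest" using a(5) e strict_prefixE' by metis
      show ?thesis
      proof (cases "rest = []")
        case True
        then show ?thesis using a(2,4) e ur by auto
      next
        case False
        have u'E: "u' \<in> E" and pvu': "length u' - length v < k" using V_D[OF a(4)] e by auto
        have p1: "prefix (u @ [n]) u'" using ur by simp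
        have pv: "prefix v (u @ [n])" using pvu by (metis prefix_append)
        have wE: "u @ [n] \<in> E" using E_prefix[OF u'E pv p1] .
        have "length (u @ [n]) \<le> length u'" using p1 prefix_length_le by blast
        then have wV: "(u @ [n], k) \<in> V" using wE pvu' unfolding V_def by auto
        have s1: "strict_prefix u (u @ [n])" by (rule sp_snoc)
        have s2: "strict_prefix (u @ [n]) u'" using ur False by (simp add: strict_prefix_def)
        have "Glt (nd u k) (nd (u @ [n]) k)" using Glt_ndI[OF uk wV s1] .
        moreover have "Glt (nd (u @ [n]) k) y" using Glt_ndI[OF wV a(4)[unfolded e] s2] a(2) e by simp
        ultimately show ?thesis using nz nd_N[OF wV] by blast
      qed
    next
      fix u0 k0 m assume a: "nd u k = nd u0 k0" "y = Inl m" "(u0,k0) \<in> V" "m \<in> M" "strict_prefix u0 m" "c m = k0"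
      have e: "u0 = u" "k0 = k" using a(1) by auto
      obtain w n0 where m: "m = w @ [n0]" "w \<in> E" "n0 \<in> A w" using M_obt[OF a(4)] by blast
      have puw: "prefix u w" using sp_M[OF a(4)] a(5) e m(1) by simp
      show ?thesis
      proof (cases "u = w")
        case True
        then show ?thesis using a(2,6) e m by auto
      next
        case False
        then have "strict_prefix u w" using puw by (simp add: strict_prefix_def)
        then obtain n rest where wr: "w = u @ n # rest" using strict_prefixE' by metis
        have p1: "prefix (u @ [n]) w" using wr by simp
        have pv: "prefix v (u @ [n])" using pvu by (metis prefix_append)
        have wE: "u @ [n] \<in> E" using E_prefix[OF m(2) pv p1] .
        have "length (u @ [n]) \<le> length w" using p1 prefix_length_le by blast
        moreover have "length w - length v < k" using c_bound[OF a(4)] a(6) e m(1) by simp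
        ultimately have wV: "(u @ [n], k) \<in> V" using wE unfolding V_def by auto
        have s2: "strict_prefix (u @ [n]) m" using sp_M[OF a(4)] p1 m(1) by simp
        have "Glt (nd u k) (nd (u @ [n]) k)" using Glt_ndI[OF uk wV sp_snoc] .
        moreover have "Glt (nd (u @ [n]) k) y" using Glt_leafI[OF wV a(4) s2] a(2,6) e by simp
        ultimately show ?thesis using nz nd_N[OF wV] by blast
      qed
    qed
  qed
next
  have uE: "u \<in> E" using V_D[OF uk] by auto
  show "(\<lambda>n. Inl (u @ [n])) ` {n \<in> A u. col u n = k} \<union> (\<lambda>n. nd (u @ [n]) k) ` {n. (u @ [n], k) \<in> V} \<subseteq> sons T (nd u k)"
  proof
    fix y assume "y \<in> (\<lambda>n. Inl (u @ [n])) ` {n \<in> A u. col u n = k} \<union> (\<lambda>n. nd (u @ [n]) k) ` {n. (u @ [n], k) \<in> V}"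
    then obtain n where yy: "(y = Inl (u @ [n]) \<and> n \<in> A u \<and> col u n = k) \<or> (y = nd (u @ [n]) k \<and> (u @ [n], k) \<in> V)"
      by blast
    have yN: "y \<in> N" and g: "Glt (nd u k) y"
      using yy Inl_N[OF M_I[OF uE]] nd_N Glt_leafI[OF uk M_I[OF uE] sp_snoc] Glt_ndI[OF uk _ sp_snoc] by auto
    have yv: "y \<noteq> Inl v" using Glt_not_root_tgt g by blast
    have ly: "lst y = u @ [n]" using yy by auto
    have ky: "key y = k" using yy by auto
    have nz: "\<not> Glt z y" if "Glt (nd u k) z" for z
    proof
      assume gz: "Glt z y"
      have "z \<noteq> Inl v" using Glt_not_root_tgt that by blast
      then obtain w where w: "z = nd w k" "strict_prefix w (u @ [n])" using Glt_src2[OF gz] ly ky by auto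
      have "strict_prefix u w" using Glt_src2[OF that[unfolded w(1)]] by auto
      then show False using sp_len2[of u w n] w(2) by blast
    qed
    show "y \<in> sons T (nd u k)" unfolding sons_def using yN g nz by auto
  qed
qed

end


context constr
begin

lemma height_T: "height_le_omega T"
  unfolding height_le_omega_def preds_def T_simps using preds_fin by blast

lemma aleph_T: "aleph0_branching T"
  unfolding aleph0_branching_def
proof (intro ballI conjI)
  fix x assume x: "x \<in> nodes T - maxnodes T"
  show "countable (sons T x)" by simp
  have xN: "x \<in> N" and xm: "x \<notin> Inl ` M" using x maxnodes_T by auto
  from N_cases[OF xN] show "infinite (sons T x)"
  proof (elim disjE exE conjE)
    assume x0: "x = Inl v"
    have "range (\<lambda>k. nd v (Suc k)) \<subseteq> sons T x" using sons_root x0 by auto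
    moreover have "inj (\<lambda>k. nd v (Suc k))" by (rule injI) simp
    then have "infinite (range (\<lambda>k. nd v (Suc k)))" using range_inj_infinite by blast
    ultimately show ?thesis using finite_subset by blast
  next
    fix u k assume a: "x = nd u k" "(u,k) \<in> V"
    have sub: "(\<lambda>n. Inl (u @ [n])) ` {n \<in> A u. col u n = k} \<subseteq> sons T x" using sons_nd[OF a(2)] a(1) by auto
    have inf: "infinite {n \<in> A u. col u n = k}" using bucket_inf V_D[OF a(2)] by blast
    have "inj_on (\<lambda>n. Inl (u @ [n]) :: node) {n \<in> A u. col u n = k}" by (rule inj_onI) simp
    then have "infinite ((\<lambda>n. Inl (u @ [n]) :: node) ` {n \<in> A u. col u n = k})"
      using inf finite_imageD by blast
    then show ?thesis using sub finite_subset by blast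
  next
    fix m assume "x = Inl m" "m \<in> M" then show ?thesis using xm by blast
  qed
qed

lemma hbound: assumes "x \<in> N" "x \<noteq> Inl v" shows "h x \<le> 2 * (length v + key x) + 1"
  using N_cases[OF assms(1)]
proof (elim disjE exE conjE)
  fix u k assume a: "x = nd u k" "(u,k) \<in> V"
  have "length u - length v < k" "prefix v u" using V_D[OF a(2)] by auto
  moreover have "length v \<le> length u" using calculation(2) prefix_length_le by blast
  ultimately show ?thesis using a(1) by simp
next
  fix m assume a: "x = Inl m" "m \<in> M"
  show ?thesis using c_bound2[OF a(2)] a(1) by simp
qed (use assms in simp)

lemma bounded_T: "bounded_chains T"
  unfolding bounded_chains_def
proof (intro allI impI)
  fix C assume ch: "is_chain T C" and ne: "C \<noteq> {}"
  have CN: "C \<subseteq> N" and cmp: "\<And>a b. a \<in> C \<Longrightarrow> b \<in> C \<Longrightarrow> a \<noteq> b \<Longrightarrow> Glt a b \<or> Glt b a"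
    using ch unfolding is_chain_def by auto
  obtain B where B: "\<forall>x\<in>C. h x \<le> B"
  proof (cases "\<exists>x0\<in>C. x0 \<noteq> Inl v")
    case True
    then obtain x0 where x0: "x0 \<in> C" "x0 \<noteq> Inl v" by blast
    have "h x \<le> 2 * (length v + key x0) + 1" if "x \<in> C" for x
    proof (cases "x = Inl v")
      case True then show ?thesis by simp
    next
      case False
      have "key x = key x0"
      proof (cases "x = x0")
        case False
        then have "Glt x x0 \<or> Glt x0 x" using cmp that x0(1) by blast
        then show ?thesis using Glt_key \<open>x \<noteq> Inl v\<close> x0(2) by metis
      qed simp
      then show ?thesis using hbound[OF _ False] CN that by fastforce
    qed
    then show ?thesis using that by blast
  next
    case False
    then have "\<forall>x\<in>C. h x \<le> 2 * length v" by auto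
    then show ?thesis using that by blast
  qed
  have fin: "finite (h ` C)" using B by (metis finite_nat_set_iff_bounded_le imageE)
  have "Max (h ` C) \<in> h ` C" using fin ne by simp
  then obtain u where u: "u \<in> C" "h u = Max (h ` C)" by auto
  have "le T c u" if "c \<in> C" for c
  proof (cases "c = u")
    case False
    have "h c \<le> h u" using u(2) fin that by simp
    then have "\<not> Glt u c" using Glt_h by fastforce
    then have "Glt c u" using cmp that u(1) False by blast
    then show ?thesis unfolding le_def by simp
  qed (simp add: le_def)
  then show "\<exists>u\<in>nodes T. \<forall>c\<in>C. le T c u" using u(1) CN by auto
qed

lemma L_mem: "p \<in> L u k \<longleftrightarrow> (\<exists>m. m \<in> M \<and> strict_prefix u m \<and> c m = k \<and> p \<in> cyl m)"
  unfolding L_def by blast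

lemma L_sub_U: "L u k \<subseteq> U" using L_mem M_D(4) by blast

lemma L_mono: assumes "strict_prefix u u'" shows "L u' k \<subseteq> L u k"
proof
  fix p assume "p \<in> L u' k"
  then obtain m where m: "m \<in> M" "strict_prefix u' m" "c m = k" "p \<in> cyl m" using L_mem by blast
  have "strict_prefix u m" using assms m(2) prefix_order.less_trans by blast
  then show "p \<in> L u k" using L_mem m by blast
qed

lemma L_cyl: "L u k \<subseteq> cyl u"
proof
  fix p assume "p \<in> L u k"
  then obtain m where m: "m \<in> M" "strict_prefix u m" "c m = k" "p \<in> cyl m" using L_mem by blast
  have "prefix u m" using m(2) by (simp add: strict_prefix_def)
  then show "p \<in> cyl u" using cyl_mono m(4) by blast
qed

lemma cyl_L: "m \<in> M \<Longrightarrow> strict_prefix u m \<Longrightarrow> cyl m \<subseteq> L u (c m)"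
  using L_mem by blast

lemma Gleaf_sub: assumes "y \<in> N" shows "Gleaf y \<subseteq> U"
  using N_cases[OF assms]
proof (elim disjE exE conjE)
  fix u k assume "y = nd u k" then show ?thesis using L_sub_U by simp
next
  fix m assume "y = Inl m" "m \<in> M" then show ?thesis using M_D(4) by simp
qed simp

lemma son_idx: assumes uk: "(u,k) \<in> V" and s: "s \<in> sons T (nd u k)"
  shows "\<exists>n. Gleaf s \<subseteq> cyl (u @ [n]) \<and> s = (if n \<in> A u then Inl (u @ [n]) else nd (u @ [n]) k)"
proof -
  have uE: "u \<in> E" using V_D[OF uk] by auto
  from s[unfolded sons_nd[OF uk]] obtain n where
    yy: "(s = Inl (u @ [n]) \<and> n \<in> A u \<and> col u n = k) \<or> (s = nd (u @ [n]) k \<and> (u @ [n], k) \<in> V)" by blast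
  then show ?thesis
  proof (elim disjE conjE)
    assume a: "s = Inl (u @ [n])" "n \<in> A u" "col u n = k"
    then show ?thesis using Gleaf_Inl[OF M_I[OF uE a(2)]] by auto
  next
    assume a: "s = nd (u @ [n]) k" "(u @ [n], k) \<in> V"
    have "u @ [n] \<in> E" using V_D[OF a(2)] by auto
    then have "n \<notin> A u" unfolding E_def A_def by auto
    moreover have "L (u @ [n]) k \<subseteq> cyl (u @ [n])" by (rule L_cyl)
    ultimately show ?thesis using a by auto
  qed
qed

lemma disj_Gleaf_nd: assumes uk: "(u,k) \<in> V" shows "disjoint_family_on Gleaf (sons T (nd u k))"
  unfolding disjoint_family_on_def
proof (intro ballI impI)
  fix s1 s2 assume s: "s1 \<in> sons T (nd u k)" "s2 \<in> sons T (nd u k)" "s1 \<noteq> s2"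
  obtain n1 where 1: "Gleaf s1 \<subseteq> cyl (u @ [n1])" "s1 = (if n1 \<in> A u then Inl (u @ [n1]) else nd (u @ [n1]) k)"
    using son_idx[OF uk s(1)] by blast
  obtain n2 where 2: "Gleaf s2 \<subseteq> cyl (u @ [n2])" "s2 = (if n2 \<in> A u then Inl (u @ [n2]) else nd (u @ [n2]) k)"
    using son_idx[OF uk s(2)] by blast
  have "n1 \<noteq> n2" using 1(2) 2(2) s(3) by auto
  then show "Gleaf s1 \<inter> Gleaf s2 = {}" using cyl_snoc_disj 1(1) 2(1) by blast
qed

lemma union_nd: assumes uk: "(u,k) \<in> V" shows "Gleaf (nd u k) = \<Union> (Gleaf ` sons T (nd u k))"
proof
  have uE: "u \<in> E" and pvu: "prefix v u" using V_D[OF uk] by auto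
  show "Gleaf (nd u k) \<subseteq> \<Union> (Gleaf ` sons T (nd u k))"
  proof
    fix p assume "p \<in> Gleaf (nd u k)"
    then obtain m where a: "m \<in> M" "strict_prefix u m" "c m = k" "p \<in> cyl m" using L_mem by auto
    obtain w n0 where m: "m = w @ [n0]" "w \<in> E" "n0 \<in> A w" using M_obt[OF a(1)] by blast
    have puw: "prefix u w" using sp_M[OF a(1)] a(2) m(1) by simp
    show "p \<in> \<Union> (Gleaf ` sons T (nd u k))"
    proof (cases "u = w")
      case True
      then have "Inl m \<in> sons T (nd u k)" using sons_nd[OF uk] m a(3) by auto
      then show ?thesis using a(1,4) by force
    next
      case False
      then have "strict_prefix u w" using puw by (simp add: strict_prefix_def)
      then obtain n rest where wr: "w = u @ n # rest" using strict_prefixE' by metis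
      have p1: "prefix (u @ [n]) w" using wr by simp
      have pv: "prefix v (u @ [n])" using pvu by (metis prefix_append)
      have wE: "u @ [n] \<in> E" using E_prefix[OF m(2) pv p1] .
      have "length (u @ [n]) \<le> length w" using p1 prefix_length_le by blast
      moreover have "length w - length v < k" using c_bound[OF a(1)] a(3) m(1) by simp
      ultimately have wV: "(u @ [n], k) \<in> V" using wE unfolding V_def by auto
      have s2: "strict_prefix (u @ [n]) m" using sp_M[OF a(1)] p1 m(1) by simp
      have "nd (u @ [n]) k \<in> sons T (nd u k)" using sons_nd[OF uk] wV by auto
      moreover have "p \<in> Gleaf (nd (u @ [n]) k)" using L_mem a s2 by auto
      ultimately show ?thesis by blast
    qed
  qed
next
  have uE: "u \<in> E" using V_D[OF uk] by auto
  show "\<Union> (Gleaf ` sons T (nd u k)) \<subseteq> Gleaf (nd u k)"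
  proof
    fix p assume "p \<in> \<Union> (Gleaf ` sons T (nd u k))"
    then obtain s where s: "s \<in> sons T (nd u k)" "p \<in> Gleaf s" by auto
    from s(1)[unfolded sons_nd[OF uk]] obtain n where
      yy: "(s = Inl (u @ [n]) \<and> n \<in> A u \<and> col u n = k) \<or> (s = nd (u @ [n]) k \<and> (u @ [n], k) \<in> V)" by blast
    then show "p \<in> Gleaf (nd u k)"
    proof (elim disjE conjE)
      assume a: "s = Inl (u @ [n])" "n \<in> A u" "col u n = k"
      have "p \<in> cyl (u @ [n])" using s(2) a Gleaf_Inl[OF M_I[OF uE a(2)]] by simp
      then have "\<exists>m. m \<in> M \<and> strict_prefix u m \<and> c m = k \<and> p \<in> cyl m"
        using M_I[OF uE a(2)] sp_snoc[of u n] a(3) c_snoc[of u n] by metis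
      then show ?thesis unfolding Gleaf_nd using L_mem by blast
    next
      assume a: "s = nd (u @ [n]) k"
      then show ?thesis using s(2) L_mono[OF sp_snoc] by auto
    qed
  qed
qed

lemma union_root: "Gleaf (Inl v) = \<Union> (Gleaf ` sons T (Inl v))"
proof
  show "Gleaf (Inl v) \<subseteq> \<Union> (Gleaf ` sons T (Inl v))"
  proof
    fix p assume "p \<in> Gleaf (Inl v)"
    then have "p \<in> U" by simp
    then obtain m where m: "m \<in> M" "p \<in> cyl m" using cover by blast
    have "nd v (c m) \<in> sons T (Inl v)" using sons_root c_pos[OF m(1)] by auto
    moreover have "p \<in> Gleaf (nd v (c m))" using L_mem m M_D(5)[OF m(1)] by auto
    ultimately show "p \<in> \<Union> (Gleaf ` sons T (Inl v))" by blast
  qed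
next
  show "\<Union> (Gleaf ` sons T (Inl v)) \<subseteq> Gleaf (Inl v)"
  proof
    fix p assume "p \<in> \<Union> (Gleaf ` sons T (Inl v))"
    then obtain k where "p \<in> L v k" using sons_root by auto
    then show "p \<in> Gleaf (Inl v)" using L_sub_U by auto
  qed
qed

lemma disj_root: "disjoint_family_on Gleaf (sons T (Inl v))"
  unfolding disjoint_family_on_def
proof (intro ballI impI)
  fix s1 s2 assume s: "s1 \<in> sons T (Inl v)" "s2 \<in> sons T (Inl v)" "s1 \<noteq> s2"
  obtain k1 k2 where k: "s1 = nd v k1" "s2 = nd v k2" using s(1,2) sons_root by auto
  show "Gleaf s1 \<inter> Gleaf s2 = {}"
  proof (rule ccontr)
    assume "Gleaf s1 \<inter> Gleaf s2 \<noteq> {}"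
    then obtain p where "p \<in> L v k1" "p \<in> L v k2" using k by auto
    then obtain m1 m2 where "m1 \<in> M" "c m1 = k1" "p \<in> cyl m1" "m2 \<in> M" "c m2 = k2" "p \<in> cyl m2"
      using L_mem by meson
    then have "k1 = k2" using M_unique by blast
    then show False using s(3) k by simp
  qed
qed

lemma locally_strict_G: "locally_strict G"
  unfolding locally_strict_def T_simps maxnodes_T
proof (intro ballI conjI)
  fix x assume x: "x \<in> N - Inl ` M"
  then have xN: "x \<in> N" and xm: "x \<notin> Inl ` M" by auto
  have "(x = Inl v) \<or> (\<exists>u k. x = nd u k \<and> (u,k) \<in> V)" using N_cases[OF xN] xm by blast
  then show "Gleaf x = \<Union> (Gleaf ` sons T x)" "disjoint_family_on Gleaf (sons T x)"
    using union_root disj_root union_nd disj_Gleaf_nd by auto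
qed

lemma open_G: "open_ftree G"
  unfolding open_ftree_def T_simps
proof
  fix x assume xN: "x \<in> N"
  from N_cases[OF xN] show "open (Gleaf x)"
  proof (elim disjE exE conjE)
    fix u k assume "x = nd u k"
    have "open (L u k)" unfolding L_def by (rule open_Union) (auto simp: open_cyl)
    then show ?thesis using \<open>x = nd u k\<close> by simp
  next
    fix m assume "x = Inl m" "m \<in> M" then show ?thesis using open_cyl by simp
  qed (simp add: Uopen)
qed

end


context constr
begin

lemma impl_T: "impl T = (\<lambda>(u,k). nd u k) ` V"
  unfolding impl_def root_T maxnodes_T T_simps N_def by auto

lemma foliage_graft_G: "foliage_graft S G"
  unfolding foliage_graft_def
proof (intro conjI ballI)
  show "is_ftree G" unfolding is_ftree_def T_simps by (rule is_tree_T)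
  show "nonincreasing G" unfolding nonincreasing_def T_simps
  proof (intro ballI impI)
    fix x y assume xy: "x \<in> N" "y \<in> N" "le T x y"
    show "Gleaf y \<subseteq> Gleaf x"
    proof (cases "x = y")
      case False
      then have g: "Glt x y" using xy(3) unfolding le_def by simp
      show ?thesis
      proof (cases "x = Inl v")
        case True then show ?thesis using Gleaf_sub[OF xy(2)] by simp
      next
        case False
        from Glt_src[OF g False] show ?thesis
        proof (elim disjE exE conjE)
          fix u u' k assume "x = nd u k" "y = nd u' k" "strict_prefix u u'"
          then show ?thesis using L_mono by simp
        next
          fix u k m assume a: "x = nd u k" "y = Inl m" "m \<in> M" "strict_prefix u m" "c m = k"
          have "cyl m \<subseteq> L u (c m)" using cyl_L a(3,4) by blast
          then show ?thesis using a by simp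
        qed
      qed
    qed simp
  qed
  show "is_graft (skel S) (skel G)"
    unfolding is_graft_def S_simps T_simps root_T maxnodes_T
  proof (intro conjI)
    show "is_tree T" by (rule is_tree_T)
    show "\<exists>a\<in>N. \<exists>b\<in>N. a \<noteq> b"
    proof (rule bexI[of _ "Inl v"])
      show "\<exists>b\<in>N. Inl v \<noteq> b"
      proof (rule bexI[of _ "nd v 1"])
        show "Inl v \<noteq> nd v 1" by (rule nd_Inl(2))
        show "nd v 1 \<in> N" by (rule nd_N[OF vV]) simp
      qed
      show "Inl v \<in> N" by (rule v_N)
    qed
    show "\<exists>r. is_least T r" using least_T by blast
    show "Inl v \<in> range Inl" by simp
    show "Inl ` M \<subseteq> {w \<in> range Inl. S_lt (Inl v) w}"
    proof
      fix x :: node assume "x \<in> Inl ` M"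
      then obtain m where "x = Inl m" "m \<in> M" by blast
      then show "x \<in> {w \<in> range Inl. S_lt (Inl v) w}" using M_D(5) by simp
    qed
    show "antichain (range Inl, S_lt) (Inl ` M)" unfolding antichain_def S_simps
    proof (intro ballI)
      fix a b :: node assume "a \<in> Inl ` M" "b \<in> Inl ` M"
      then obtain m m' where "a = Inl m" "b = Inl m'" "m \<in> M" "m' \<in> M" by auto
      show "\<not> S_lt a b"
      proof
        assume "S_lt a b"
        then have "strict_prefix m m'" using \<open>a = Inl m\<close> \<open>b = Inl m'\<close> by simp
        then have "prefix m m'" "m \<noteq> m'" by (auto simp: strict_prefix_def)
        then show False using M_antichain \<open>m \<in> M\<close> \<open>m' \<in> M\<close> by blast
      qed
    qed
    show "impl T \<inter> range Inl = {}" unfolding impl_T nd_def by auto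
  qed
  show "leaf G (root (skel G)) \<subseteq> leaf S (root (skel G))"
    unfolding T_simps root_T S_simps using Usub by simp
  fix m assume "m \<in> maxnodes (skel G)"
  then obtain m' where "m = Inl m'" "m' \<in> M" unfolding T_simps maxnodes_T by auto
  then show "leaf G m = leaf S m" unfolding T_simps S_simps by simp
qed

lemma S_sons: "Inl (w @ [n]) \<in> sons (range Inl, S_lt) (Inl w)"
  unfolding sons_def S_simps
proof (intro CollectI conjI)
  show "Inl (w @ [n]) \<in> range Inl" by simp
  show "S_lt (Inl w) (Inl (w @ [n]))" using sp_snoc by simp
  show "\<not> (\<exists>z\<in>range Inl. S_lt (Inl w) z \<and> S_lt z (Inl (w @ [n])))"
  proof
    assume "\<exists>z\<in>range Inl. S_lt (Inl w) z \<and> S_lt z (Inl (w @ [n]))"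
    then obtain z' where "strict_prefix w z'" "strict_prefix z' (w @ [n])" by auto
    then show False using sp_len2[of w z' n] by blast
  qed
qed

lemma gg_main: assumes wk: "(w,k) \<in> V"
  shows "gg (shoot G (nd w k)) (shoot S (Inl w))"
  unfolding gg_def
proof (intro ballI impI)
  fix D assume "D \<in> shoot S (Inl w)"
  then obtain C where C: "D = (\<Union>s\<in>C. S_leaf s)" "C \<subseteq> sons (range Inl, S_lt) (Inl w)"
    "finite (sons (range Inl, S_lt) (Inl w) - C)"
    unfolding shoot_def S_simps by auto
  define Cn where "Cn = {n. Inl (w @ [n]) \<in> C}"
  have "(\<lambda>n. Inl (w @ [n]) :: node) ` (- Cn) \<subseteq> sons (range Inl, S_lt) (Inl w) - C"
    using S_sons unfolding Cn_def by auto
  then have "finite ((\<lambda>n. Inl (w @ [n]) :: node) ` (- Cn))" using C(3) finite_subset by blast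
  moreover have "inj_on (\<lambda>n. Inl (w @ [n]) :: node) (- Cn)" by (rule inj_onI) simp
  ultimately have finC: "finite (- Cn)" using finite_imageD by blast
  define sonof where "sonof n = (if n \<in> A w then Inl (w @ [n]) else nd (w @ [n]) k)" for n
  have sinj: "sonof a = sonof b \<Longrightarrow> a = b" for a b unfolding sonof_def by (auto split: if_splits)
  define C' where "C' = sons T (nd w k) \<inter> sonof ` Cn"
  have sidx: "\<exists>n. Gleaf s \<subseteq> cyl (w @ [n]) \<and> s = sonof n" if "s \<in> sons T (nd w k)" for s
    using son_idx[OF wk that] unfolding sonof_def by blast
  have "sons T (nd w k) - C' \<subseteq> sonof ` (- Cn)"
  proof
    fix s assume s: "s \<in> sons T (nd w k) - C'"
    then obtain n where n: "s = sonof n" using sidx by blast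
    then have "n \<notin> Cn" using s unfolding C'_def by auto
    then show "s \<in> sonof ` (- Cn)" using n by auto
  qed
  then have fin': "finite (sons (skel G) (nd w k) - C')" using finC finite_subset by auto
  define G' where "G' = (\<Union>s\<in>C'. Gleaf s)"
  have G'sh: "G' \<in> shoot G (nd w k)"
    unfolding shoot_def G'_def using fin' unfolding C'_def by auto
  have G'D: "G' \<subseteq> D"
  proof
    fix p assume "p \<in> G'"
    then obtain s where s: "s \<in> C'" "p \<in> Gleaf s" unfolding G'_def by auto
    then obtain n0 where n0: "n0 \<in> Cn" "s = sonof n0" unfolding C'_def by auto
    obtain n where n: "Gleaf s \<subseteq> cyl (w @ [n])" "s = sonof n" using sidx s(1) unfolding C'_def by blast
    have "n = n0" using sinj n(2) n0(2) by simp
    then have "Inl (w @ [n]) \<in> C" using n0(1) unfolding Cn_def by simp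
    moreover have "p \<in> S_leaf (Inl (w @ [n]))" using s(2) n(1) by auto
    ultimately show "p \<in> D" using C(1) by blast
  qed
  have "infinite {n \<in> A w. col w n = k}" using bucket_inf V_D[OF wk] by blast
  then have "\<not> {n \<in> A w. col w n = k} \<subseteq> - Cn" using finC finite_subset by blast
  then obtain n where n: "n \<in> A w" "col w n = k" "n \<in> Cn" by blast
  have wE: "w \<in> E" using V_D[OF wk] by blast
  have "Inl (w @ [n]) \<in> sons T (nd w k)" using sons_nd[OF wk] n by auto
  moreover have "sonof n = Inl (w @ [n])" using n unfolding sonof_def by simp
  ultimately have "Inl (w @ [n]) \<in> C'" unfolding C'_def using n(3) by (metis IntI imageI)
  moreover have "Gleaf (Inl (w @ [n])) \<noteq> {}" using Gleaf_Inl[OF M_I[OF wE n(1)]] cyl_ne by simp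
  ultimately have "G' \<noteq> {}" unfolding G'_def by blast
  then show "\<exists>G\<in>shoot G (nd w k). G \<noteq> {} \<and> G \<subseteq> D" using G'sh G'D by blast
qed

lemma flesh_G: "flesh G \<subseteq> U"
  unfolding flesh_def T_simps using Gleaf_sub by blast

lemma preserves_G: "preserves_shoots S G"
  unfolding preserves_shoots_def
proof (intro ballI)
  fix p y assume p: "p \<in> flesh G" and y: "y \<in> scope S p \<inter> ({root (skel G)} \<union> expl (skel S) (skel G))"
  have pU: "p \<in> U" using p flesh_G by blast
  obtain mp where mp: "mp \<in> M" "p \<in> cyl mp" using cover[OF pU] by blast
  obtain w where yw: "y = Inl w" "p \<in> cyl w" using y unfolding scope_def S_simps
    by (auto simp: S_leaf_def split: sum.splits)
  have cases: "w = v \<or> (strict_prefix v w \<and> \<not> (\<exists>m\<in>M. prefix m w))"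
  proof -
    have "y = Inl v \<or> y \<in> expl (range Inl, S_lt) T" using y unfolding T_simps root_T S_simps by auto
    then show ?thesis
    proof
      assume "y = Inl v" then show ?thesis using yw by simp
    next
      assume e: "y \<in> expl (range Inl, S_lt) T"
      then have "strict_prefix v w" using yw unfolding expl_def root_T S_simps by auto
      moreover have "\<not> (\<exists>m\<in>M. prefix m w)"
      proof
        assume "\<exists>m\<in>M. prefix m w"
        then obtain m where "m \<in> M" "prefix m w" by blast
        then have "y \<in> upclose (range Inl, S_lt) (maxnodes T)"
          unfolding upclose_def maxnodes_T S_simps le_def using yw
          by (auto simp: strict_prefix_def)
        then show False using e unfolding expl_def by simp
      qed
      ultimately show ?thesis by simp
    qed
  qed
  have spw: "strict_prefix w mp" and pvw: "prefix v w"
  proof -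
    have "prefix w mp \<or> prefix mp w" using cyl_comparable[OF yw(2) mp(2)] .
    then have "strict_prefix w mp \<and> prefix v w"
      using cases
    proof (elim disjE conjE)
      assume "w = v" then show ?thesis using M_D(5)[OF mp(1)] by simp
    next
      assume "prefix w mp" "strict_prefix v w" "\<not> (\<exists>m\<in>M. prefix m w)"
      then show ?thesis using mp(1) by (auto simp: strict_prefix_def)
    next
      assume "prefix mp w" "strict_prefix v w" "\<not> (\<exists>m\<in>M. prefix m w)"
      then show ?thesis using mp(1) by blast
    next
      assume "w = v" then show ?thesis using M_D(5)[OF mp(1)] by simp
    qed
    then show "strict_prefix w mp" "prefix v w" by auto
  qed
  have pwb: "prefix w (butlast mp)" using sp_M[OF mp(1)] spw by simp
  have wE: "w \<in> E" using E_prefix[OF M_D(2)[OF mp(1)] pvw pwb] .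
  have "length w \<le> length (butlast mp)" using pwb prefix_length_le by blast
  then have wV: "(w, c mp) \<in> V" using c_bound[OF mp(1)] wE unfolding V_def by auto
  define x where "x = nd w (c mp)"
  have xs: "x \<in> scope G p" unfolding scope_def T_simps x_def using nd_N[OF wV] L_mem mp spw by auto
  have xi: "x \<in> {root (skel G)} \<union> impl (skel G)" unfolding T_simps impl_T x_def using wV by auto
  have "gg (shoot G x) (shoot S y)" unfolding x_def yw(1) by (rule gg_main[OF wV])
  then show "\<exists>x\<in>scope G p \<inter> ({root (skel G)} \<union> impl (skel G)). gg (shoot G x) (shoot S y)"
    using xs xi by blast
qed

lemma impl_ne: "impl (skel G) \<noteq> {}"
  unfolding T_simps impl_T using vV[of 1] by auto

lemma cut_G: "cut S G = leaf S (Inl v) - U"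
  unfolding cut_def T_simps root_T by simp

lemma U_union: "U = (\<Union>z \<in> maxnodes (skel G). leaf S z)"
  unfolding T_simps maxnodes_T S_simps
proof
  show "U \<subseteq> (\<Union>z \<in> Inl ` M. S_leaf z)" using cover by fastforce
  show "(\<Union>z \<in> Inl ` M. S_leaf z) \<subseteq> U" using M_D(4) by auto
qed

lemma disj_max: "disjoint_family_on (leaf S) (maxnodes (skel G))"
  unfolding T_simps maxnodes_T S_simps disjoint_family_on_def
proof (intro ballI impI)
  fix a b :: node assume "a \<in> Inl ` M" "b \<in> Inl ` M" "a \<noteq> b"
  then obtain m m' where mm: "a = Inl m" "b = Inl m'" "m \<in> M" "m' \<in> M" "m \<noteq> m'" by auto
  show "S_leaf a \<inter> S_leaf b = {}" using M_unique[OF mm(3,4)] mm by auto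
qed

end

theorem mainTheorem14:
  fixes v :: "nat list" and U :: "(nat \<Rightarrow> nat) set"
  assumes "U \<subset> leaf S (Inl v)"
    and "open U"
    and "pi_dense_at U v"
  shows "\<exists>G :: (node, nat \<Rightarrow> nat) ftree.
           is_ftree G \<and>
           root (skel G) = Inl v \<and>
           height_le_omega (skel G) \<and>
           aleph0_branching (skel G) \<and>
           bounded_chains (skel G) \<and>
           locally_strict G \<and>
           open_ftree G \<and>
           foliage_graft S G \<and>
           preserves_shoots S G \<and>
           impl (skel G) \<noteq> {} \<and>
           cut S G = leaf S (Inl v) - U \<and>
           U = (\<Union>z \<in> maxnodes (skel G). leaf S z) \<and>
           disjoint_family_on (leaf S) (maxnodes (skel G))"
proof -
  have lv: "leaf S (Inl v) = cyl v" by (simp add: S_simps)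
  have Usub: "U \<subseteq> cyl v" using assms(1) lv by auto
  have Une: "\<not> cyl v \<subseteq> U" using assms(1) lv by auto
  interpret constr v U using Usub Une assms(2,3) by unfold_locales
  have "is_ftree G" unfolding is_ftree_def T_simps by (rule is_tree_T)
  moreover have "root (skel G) = Inl v" unfolding T_simps by (rule root_T)
  moreover have "height_le_omega (skel G)" unfolding T_simps by (rule height_T)
  moreover have "aleph0_branching (skel G)" unfolding T_simps by (rule aleph_T)
  moreover have "bounded_chains (skel G)" unfolding T_simps by (rule bounded_T)
  ultimately show ?thesis
    using locally_strict_G open_G foliage_graft_G preserves_G impl_ne cut_G U_union disj_max
    by blast
qed

end
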